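(* Let $u\in S$ and assume $\hat\sigma(u)>0$. Then there exists $\tau_0>0$ such that $\lambda(u+\tau\hat d(u))>\lambda(u)$ for all $\tau\in(0,\tau_0)$.
   Context: $T,G:\mathbb{R}^n\to\mathbb{R}^n$ are continuously differentiable; $S\subset\mathbb{R}^n$ is open with $\langle G(u),\psi\rangle>0$ for all $u\in S$ and all nonzero $\psi$ with nonnegative entries. For $u\in S$: $f_i(u)=T_i(u)/G_i(u)$, $\lambda(u)=\min_i f_i(u)$, $N(u)=\{i:f_i(u)=\lambda(u)\}=\{i_1<\dots<i_N\}$, $\mathcal{A}_{N(u)}(u)$ is the $n\times N$ matrix with columns $\nabla f_{i_1}(u),\dots,\nabla f_{i_N}(u)$. Let $\hat\alpha(u)$ be a minimizer of $\|\mathcal{A}_{N(u)}(u)\alpha\|^2$ over $\{\alpha\in\mathbb{R}^N:\alpha_k\ge0,\sum_k\alpha_k=1\}$, $\hat\sigma(u)=\|\mathcal{A}_{N(u)}(u)\hat\alpha(u)\|$, and, when $\hat\sigma(u)>0$, $\hat d(u)=\mathcal{A}_{N(u)}(u)\hat\alpha(u)/\|\mathcal{A}_{N(u)}(u)\hat\alpha(u)\|$. *)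

theory Defs
  imports "HOL-Analysis.Analysis"
begin

definition cont_diff :: "(real^'n \<Rightarrow> real^'n) \<Rightarrow> bool" where
  "cont_diff F \<longleftrightarrow> (\<exists>F'. (\<forall>x. (F has_derivative blinfun_apply (F' x)) (at x))
                        \<and> continuous_on UNIV F')"

definition grad :: "(real^'n \<Rightarrow> real) \<Rightarrow> real^'n \<Rightarrow> real^'n" where
  "grad f u = (\<chi> j. frechet_derivative f (at u) (axis j 1))"

definition fval :: "(real^'n \<Rightarrow> real^'n) \<Rightarrow> (real^'n \<Rightarrow> real^'n) \<Rightarrow> 'n \<Rightarrow> real^'n \<Rightarrow> real" where
  "fval T G i u = T u $ i / G u $ i"

definition lam :: "(real^'n \<Rightarrow> real^'n) \<Rightarrow> (real^'n \<Rightarrow> real^'n) \<Rightarrow> real^'n \<Rightarrow> real" where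
  "lam T G u = Min (range (\<lambda>i. fval T G i u))"

definition Nset :: "(real^'n \<Rightarrow> real^'n) \<Rightarrow> (real^'n \<Rightarrow> real^'n) \<Rightarrow> real^'n \<Rightarrow> 'n set" where
  "Nset T G u = {i. fval T G i u = lam T G u}"

definition Acomb :: "(real^'n \<Rightarrow> real^'n) \<Rightarrow> (real^'n \<Rightarrow> real^'n) \<Rightarrow> real^'n \<Rightarrow> ('n \<Rightarrow> real) \<Rightarrow> real^'n" where
  "Acomb T G u \<alpha> = (\<Sum>i\<in>Nset T G u. \<alpha> i *\<^sub>R grad (fval T G i) u)"

end

theory Submission
  imports Defs
begin

lemma lin_grad:
  fixes D :: "real^'n \<Rightarrow> real"
  assumes "linear D"
  shows "D d = (\<chi> j. D (axis j 1)) \<bullet> d"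
proof -
  have "d = (\<Sum>j\<in>UNIV. d$j *\<^sub>R axis j 1)"
    by (simp add: vec_eq_iff sum_component axis_def if_distrib cong: if_cong)
  then have "D d = (\<Sum>j\<in>UNIV. d$j * D (axis j 1))"
  proof -
    have "D d = (\<Sum>j\<in>UNIV. D (d$j *\<^sub>R axis j 1))"
      by (subst \<open>d = _\<close>) (simp add: linear_sum[OF assms])
    also have "\<dots> = (\<Sum>j\<in>UNIV. d$j * D (axis j 1))"
      by (simp add: linear_scale[OF assms])
    finally show ?thesis .
  qed
  then show ?thesis by (simp add: inner_vec_def mult.commute)
qed

lemma minnorm_opt:
  fixes g :: "'i \<Rightarrow> real^'n" and N :: "'i set"
  assumes fin: "finite N" and iN: "i \<in> N"
    and a0: "\<forall>j\<in>N. \<alpha> j \<ge> 0" and a1: "(\<Sum>j\<in>N. \<alpha> j) = 1"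
    and opt: "\<forall>\<beta>. (\<forall>j\<in>N. \<beta> j \<ge> 0) \<and> (\<Sum>j\<in>N. \<beta> j) = 1
              \<longrightarrow> (norm (\<Sum>j\<in>N. \<alpha> j *\<^sub>R g j))\<^sup>2 \<le> (norm (\<Sum>j\<in>N. \<beta> j *\<^sub>R g j))\<^sup>2"
  shows "(\<Sum>j\<in>N. \<alpha> j *\<^sub>R g j) \<bullet> (\<Sum>j\<in>N. \<alpha> j *\<^sub>R g j)
         \<le> g i \<bullet> (\<Sum>j\<in>N. \<alpha> j *\<^sub>R g j)"
proof (rule ccontr)
  define v where "v = (\<Sum>j\<in>N. \<alpha> j *\<^sub>R g j)"
  define w where "w = g i - v"
  define c where "c = w \<bullet> v"
  assume "\<not> ?thesis"
  then have c: "c < 0" unfolding c_def w_def v_def by (simp add: inner_diff_left)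
  then have "w \<noteq> 0" unfolding c_def by auto
  define K where "K = w \<bullet> w"
  have K: "K > 0" using \<open>w \<noteq> 0\<close> unfolding K_def by simp
  define t where "t = min 1 (-c/K)"
  have t0: "t > 0" using c K unfolding t_def by (simp add: divide_neg_pos)
  have t1: "t \<le> 1" unfolding t_def by (simp add: divide_neg_pos)
  have tK: "t * K \<le> -c" unfolding t_def using K
    by (metis min.cobounded2 mult.commute pos_le_divide_eq)
  define \<beta> where "\<beta> = (\<lambda>j. (1-t) * \<alpha> j + t * (if j = i then 1 else 0))"
  have b0: "\<forall>j\<in>N. \<beta> j \<ge> 0" using a0 t0 t1 unfolding \<beta>_def by auto
  have b1: "(\<Sum>j\<in>N. \<beta> j) = 1" unfolding \<beta>_def
    using fin iN a1 by (simp add: sum.distrib sum_distrib_left[symmetric])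
  have "(\<Sum>j\<in>N. \<beta> j *\<^sub>R g j) = (1-t) *\<^sub>R v + t *\<^sub>R g i"
  proof -
    have "\<And>j. \<beta> j *\<^sub>R g j = (1-t) *\<^sub>R (\<alpha> j *\<^sub>R g j) + (if j = i then t *\<^sub>R g i else 0)"
      unfolding \<beta>_def by (simp add: scaleR_add_left)
    then have "(\<Sum>j\<in>N. \<beta> j *\<^sub>R g j) = (\<Sum>j\<in>N. (1-t) *\<^sub>R (\<alpha> j *\<^sub>R g j)) + (\<Sum>j\<in>N. (if j = i then t *\<^sub>R g i else 0))"
      by (simp add: sum.distrib)
    also have "\<dots> = (1-t) *\<^sub>R v + t *\<^sub>R g i"
      using fin iN unfolding v_def by (simp add: scaleR_sum_right)
    finally show ?thesis .
  qed
  also have "\<dots> = v + t *\<^sub>R w" unfolding w_def by (simp add: algebra_simps)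
  finally have eq: "(\<Sum>j\<in>N. \<beta> j *\<^sub>R g j) = v + t *\<^sub>R w" .
  have "(norm v)\<^sup>2 \<le> (norm (v + t *\<^sub>R w))\<^sup>2"
    using opt b0 b1 eq unfolding v_def by metis
  then have "v \<bullet> v \<le> v \<bullet> v + 2 * t * c + t * t * K"
    unfolding power2_norm_eq_inner c_def K_def
    by (simp add: inner_add_left inner_add_right inner_commute algebra_simps)
  moreover have "t * (t * K) \<le> t * (-c)" using mult_left_mono[OF tK] t0 by simp
  ultimately have "0 \<le> t * c" by (simp add: algebra_simps)
  with mult_pos_neg[OF t0 c] show False by simp
qed

theorem corollary3:
  fixes T G :: "real^'n \<Rightarrow> real^'n" and S :: "(real^'n) set"
    and u :: "real^'n" and \<alpha> :: "'n \<Rightarrow> real"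
  assumes "cont_diff T" and "cont_diff G" and "open S"
    and "\<forall>v\<in>S. \<forall>\<psi>::real^'n. (\<forall>i. \<psi> $ i \<ge> 0) \<and> \<psi> \<noteq> 0 \<longrightarrow> G v \<bullet> \<psi> > 0"
    and "u \<in> S"
    and "\<forall>i\<in>Nset T G u. \<alpha> i \<ge> 0" and "(\<Sum>i\<in>Nset T G u. \<alpha> i) = 1"
    and "\<forall>\<beta>. (\<forall>i\<in>Nset T G u. \<beta> i \<ge> 0) \<and> (\<Sum>i\<in>Nset T G u. \<beta> i) = 1
              \<longrightarrow> (norm (Acomb T G u \<alpha>))\<^sup>2 \<le> (norm (Acomb T G u \<beta>))\<^sup>2"
    and "norm (Acomb T G u \<alpha>) > 0"
  shows "\<exists>\<tau>0>0. \<forall>\<tau>. 0 < \<tau> \<and> \<tau> < \<tau>0 \<longrightarrow>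
           lam T G (u + \<tau> *\<^sub>R (Acomb T G u \<alpha> /\<^sub>R norm (Acomb T G u \<alpha>))) > lam T G u"
proof -
  define N where "N = Nset T G u"
  define v where "v = Acomb T G u \<alpha>"
  define d where "d = v /\<^sub>R norm v"
  define g where "g = (\<lambda>i. grad (fval T G i) u)"
  have nv: "norm v > 0" using assms(9) unfolding v_def .
  obtain T' where T': "\<And>x. (T has_derivative blinfun_apply (T' x)) (at x)"
    using assms(1) unfolding cont_diff_def by blast
  obtain G' where G': "\<And>x. (G has_derivative blinfun_apply (G' x)) (at x)"
    using assms(2) unfolding cont_diff_def by blast
  have Gpos: "G u $ i > 0" for i
  proof -
    have "G u \<bullet> axis i 1 > 0"
    proof -
      have "(\<forall>j. axis i (1::real) $ j \<ge> 0) \<and> axis i (1::real) \<noteq> 0"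
        by (auto simp: axis_eq_0_iff) (simp add: axis_def)
      then show ?thesis using assms(4) assms(5) by blast
    qed
    then show ?thesis by (simp add: inner_axis)
  qed
  have diff: "fval T G i differentiable (at u)" for i
  proof -
    have "((\<lambda>x. T x $ i) has_derivative (\<lambda>h. T' u h $ i)) (at u)"
      by (rule bounded_linear.has_derivative[OF bounded_linear_vec_nth T'])
    moreover have "((\<lambda>x. G x $ i) has_derivative (\<lambda>h. G' u h $ i)) (at u)"
      by (rule bounded_linear.has_derivative[OF bounded_linear_vec_nth G'])
    ultimately have "\<exists>D. ((\<lambda>x. T x $ i / G x $ i) has_derivative D) (at u)"
      using has_derivative_divide[of "\<lambda>x. T x $ i" _ u UNIV "\<lambda>x. G x $ i"] Gpos[of i] by fastforce
    then show ?thesis unfolding fval_def differentiable_def by blast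
  qed
  define D where "D i = frechet_derivative (fval T G i) (at u)" for i
  have Dd: "(fval T G i has_derivative D i) (at u)" for i
    using diff[of i] unfolding D_def frechet_derivative_works .
  have Dlin: "linear (D i)" for i using Dd[of i] has_derivative_linear by blast
  have gD: "D i d = g i \<bullet> d" for i
    using lin_grad[OF Dlin[of i], of d] unfolding g_def grad_def D_def by simp
  have deriv: "DERIV (\<lambda>\<tau>. fval T G i (u + \<tau> *\<^sub>R d)) 0 :> (g i \<bullet> d)" for i
  proof -
    have l: "((\<lambda>\<tau>::real. u + \<tau> *\<^sub>R d) has_derivative (\<lambda>h. h *\<^sub>R d)) (at 0)"
      by (auto intro!: derivative_eq_intros)
    have "((\<lambda>\<tau>. fval T G i (u + \<tau> *\<^sub>R d)) has_derivative (\<lambda>h. D i (h *\<^sub>R d))) (at 0)"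
      using has_derivative_compose[OF l, of "fval T G i" "D i"] Dd[of i] by simp
    moreover have "(\<lambda>h. D i (h *\<^sub>R d)) = (*) (g i \<bullet> d)"
      using linear_scale[OF Dlin[of i]] gD by (auto simp: fun_eq_iff)
    ultimately show ?thesis unfolding has_field_derivative_def by simp
  qed
  have finN: "finite N" by simp
  have opt: "v \<bullet> v \<le> g i \<bullet> v" if "i \<in> N" for i
    using minnorm_opt[OF finN that, of \<alpha> g] assms(6,7,8)
    unfolding v_def Acomb_def N_def g_def by blast
  have pos: "g i \<bullet> d > 0" if "i \<in> N" for i
  proof -
    have "v \<bullet> v > 0" using nv by simp
    then have "g i \<bullet> v > 0" using opt[OF that] by linarith
    then show ?thesis unfolding d_def using nv by simp
  qed
  have lamle: "lam T G w \<le> fval T G i w" for w i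
    unfolding lam_def by (rule Min_le) auto
  have lamin: "lam T G w \<in> range (\<lambda>i. fval T G i w)" for w
    unfolding lam_def by (rule Min_in) auto
  have ev: "eventually (\<lambda>\<tau>. fval T G i (u + \<tau> *\<^sub>R d) > lam T G u) (at_right 0)" for i
  proof (cases "i \<in> N")
    case True
    obtain e where e: "e > 0" "\<forall>h>0. h < e \<longrightarrow> fval T G i (u + 0 *\<^sub>R d) < fval T G i (u + (0 + h) *\<^sub>R d)"
      using DERIV_pos_inc_right[OF deriv[of i] pos[OF True]] by blast
    have "fval T G i u = lam T G u" using True unfolding N_def Nset_def by simp
    then show ?thesis using e eventually_at_right_real[OF e(1)]
      by (auto elim!: eventually_mono)
  next
    case False
    have gt: "fval T G i (u + 0 *\<^sub>R d) > lam T G u"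
      using False lamle[of u i] unfolding N_def Nset_def by auto
    have "isCont (\<lambda>\<tau>. fval T G i (u + \<tau> *\<^sub>R d)) 0" using DERIV_isCont[OF deriv[of i]] .
    then have "((\<lambda>\<tau>. fval T G i (u + \<tau> *\<^sub>R d)) \<longlongrightarrow> fval T G i (u + 0 *\<^sub>R d)) (at_right 0)"
      unfolding isCont_def by (rule tendsto_mono[OF at_le, rotated]) simp
    from order_tendstoD(1)[OF this gt] show ?thesis .
  qed
  have "eventually (\<lambda>\<tau>. \<forall>i. fval T G i (u + \<tau> *\<^sub>R d) > lam T G u) (at_right 0)"
    using ev by (simp add: eventually_all_finite)
  then obtain b where b: "b > 0" "\<forall>y>0. y < b \<longrightarrow> (\<forall>i. fval T G i (u + y *\<^sub>R d) > lam T G u)"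
    unfolding eventually_at_right_field by auto
  show ?thesis
  proof (intro exI[of _ b] conjI allI impI)
    fix \<tau> :: real assume "0 < \<tau> \<and> \<tau> < b"
    then have "\<forall>i. fval T G i (u + \<tau> *\<^sub>R d) > lam T G u" using b by blast
    moreover obtain i where "lam T G (u + \<tau> *\<^sub>R d) = fval T G i (u + \<tau> *\<^sub>R d)"
      using lamin by blast
    ultimately show "lam T G (u + \<tau> *\<^sub>R (Acomb T G u \<alpha> /\<^sub>R norm (Acomb T G u \<alpha>))) > lam T G u"
      unfolding d_def v_def by metis
  qed (use b in simp)
qed
end
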